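(* Let $S$ be a rectangular domain and $\xi=(\xi_y)_{y\in S}$ with $\xi_y\ge0$. Let $\bar\eta=\bar\eta(0,\xi)$ be the flow field on $\mathbb{E}(\bar S)$ generated by $\xi$ with zero boundary inflow, and let $H_S(\xi)=\sum_{\ell\in C(S)}w_\eta(\ell)$. Let $G_S(\xi)=\max_{\pi}\sum_{y\in\pi}\xi_y$, the maximum being over all paths $\pi=(y_0,\dots,y_m)$ of points of $S$ such that $y_0$ is the point of $S$ with minimal $t$-coordinate, $y_m$ is the point of $S$ with maximal $t$-coordinate, and $y_{i+1}-y_i\in\{(1,1),(1,-1)\}$ for all $i$. Then $G_S(\xi)=H_S(\xi)$.
   Context: Lattice and edges. $\tilde{\mathbb{Z}}^2=\{(t,x)\in\mathbb{Z}^2:t+x\text{ even}\}$; edges join points at distance $\sqrt2$. For $y=(t,x)$: - $e^\nearrow_y=\langle(t,x),(t+1,x+1)\rangle$, - $e^\searrow_y=\langle(t,x),(t+1,x-1)\rangle$, - $e^\swarrow_y=\langle(t-1,x-1),(t,x)\rangle$, - $e^\nwarrow_y=\langle(t-1,x+1),(t,x)\rangle$. Domains. A rectangular domain is a nonempty set $S=\{(t,x)\in\tilde{\mathbb{Z}}^2: a\le t+x\le b,\ c\le t-x\le d\}$ with even integers $a\le b$, $c\le d$. It has unique points of minimal and of maximal $t$-coordinate. $\bar S$ is $S$ together with all points joined by an edge to a point of $S$; $\partial\bar S=\bar S\setminus S$; $\mathbb{E}(\bar S)$ is the set of edges with at least one endpoint in $S$. Flow field. A flow field is $\eta(e)\ge0$,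 $e\in\mathbb{E}(\bar S)$, with $\eta(e^\nwarrow_y)+\eta(e^\nearrow_y)=\eta(e^\swarrow_y)+\eta(e^\searrow_y)$ for all $y\in S$; its birth field is $\xi_y=\eta(e^\nearrow_y)\wedge\eta(e^\searrow_y)$. Generated flow field $\bar\eta(0,\xi)$. Set $\eta(e)=0$ on every edge $e^\swarrow_y$ or $e^\nwarrow_y$ ($y\in S$) whose other endpoint lies outside $S$. Then, recursively in increasing $t$, for $y\in S$: $$\eta(e^\nearrow_y)=\xi_y+[\eta(e^\swarrow_y)-\eta(e^\nwarrow_y)]^+,\qquad \eta(e^\searrow_y)=\xi_y+[\eta(e^\nwarrow_y)-\eta(e^\swarrow_y)]^+.$$ Association. For $y\in S$, lower edge $f_1\in\{e^\swarrow_y,e^\searrow_y\}$ with $p_1\in(0,\eta(f_1)]$, and upper edge $f_2\in\{e^\nwarrow_y,e^\nearrow_y\}$ with $p_2\in(0,\eta(f_2)]$, write $(f_1,p_1)\sim_y(f_2,p_2)$ exactly when: - Case 1: $f_1=e^\swarrow_y$, $f_2=e^\nwarrow_y$, $p_1\le\eta(f_1)\wedge\eta(f_2)$, $p_2=p_1$; - Case 2: $f_1=e^\searrow_y$, $f_2=e^\nwarrow_y$, $p_2>\eta(e^\swarrow_y)$, $p_1=p_2-\eta(e^\swarrow_y)$; - Case 3: $f_1=e^\swarrow_y$, $f_2=e^\nearrow_y$, $p_1>\eta(e^\nwarrow_y)$, $p_2=p_1-\eta(e^\nwarrow_y)$; - Case 4: $f_1=e^\searrow_y$, $f_2=e^\nearrow_y$,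 $p_i>\eta(f_i)-\xi_y$, $\eta(f_1)-p_1=\eta(f_2)-p_2$. Broken traces. A broken trace is $\ell=(y_0,e_1,y_1,\dots,e_n,y_n)$, $n\ge1$, with $e_i=\langle y_{i-1},y_i\rangle$, $x_i=x_{i-1}+1$, $t_i-t_{i-1}\in\{\pm1\}$. $\ell\subseteq\bar S$ means $y_0,y_n\in\bar S$, $y_1,\dots,y_{n-1}\in S$, all $e_i\in\mathbb{E}(\bar S)$. $C(S)$ is the set of $\ell\subseteq\bar S$ with $y_0,y_n\in\partial\bar S$. Weight. $w_\eta(\ell)$ is the Lebesgue measure of the set of $p_1\in(0,\eta(e_1)]$ admitting $p_i\in(0,\eta(e_i)]$ with $(e_{i-1},p_{i-1})\sim_{y_{i-1}}(e_i,p_i)$ for $i=2,\dots,n$. *)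

theory Defs
  imports "HOL-Analysis.Analysis"
begin

text \<open>Points are pairs (t, x) of integers; the lattice consists of those with t + x even.\<close>
type_synonym point = "int \<times> int"

text \<open>An edge joins points at distance sqrt 2; we represent it as the ordered pair
  (lower-t endpoint, higher-t endpoint).\<close>
type_synonym edge = "point \<times> point"

definition lattice :: "point \<Rightarrow> bool" where
  "lattice p \<longleftrightarrow> even (fst p + snd p)"

definition is_edge :: "edge \<Rightarrow> bool" where
  "is_edge e \<longleftrightarrow> lattice (fst e) \<and> lattice (snd e) \<and>
     fst (snd e) = fst (fst e) + 1 \<and> \<bar>snd (snd e) - snd (fst e)\<bar> = 1"

definition e_ne :: "point \<Rightarrow> edge" where
  "e_ne y = (y, (fst y + 1, snd y + 1))"
definition e_se :: "point \<Rightarrow> edge" where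
  "e_se y = (y, (fst y + 1, snd y - 1))"
definition e_sw :: "point \<Rightarrow> edge" where
  "e_sw y = ((fst y - 1, snd y - 1), y)"
definition e_nw :: "point \<Rightarrow> edge" where
  "e_nw y = ((fst y - 1, snd y + 1), y)"

text \<open>Rectangular domain with parameters a b c d (assumed even, a \<le> b, c \<le> d).\<close>
definition rect :: "int \<Rightarrow> int \<Rightarrow> int \<Rightarrow> int \<Rightarrow> point set" where
  "rect a b c d = {(t, x). even (t + x) \<and> a \<le> t + x \<and> t + x \<le> b \<and> c \<le> t - x \<and> t - x \<le> d}"

definition adjacent :: "point \<Rightarrow> point \<Rightarrow> bool" where
  "adjacent p q \<longleftrightarrow> \<bar>fst p - fst q\<bar> = 1 \<and> \<bar>snd p - snd q\<bar> = 1"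

definition closure_dom :: "point set \<Rightarrow> point set" where
  "closure_dom S = S \<union> {p. lattice p \<and> (\<exists>q\<in>S. adjacent p q)}"

definition bdry_dom :: "point set \<Rightarrow> point set" where
  "bdry_dom S = closure_dom S - S"

definition edges_dom :: "point set \<Rightarrow> edge set" where
  "edges_dom S = {e. is_edge e \<and> (fst e \<in> S \<or> snd e \<in> S)}"

text \<open>Generated flow field with zero boundary inflow: eta satisfies the defining boundary
  conditions and recursion equations of \<open>\<eta>(0,\<xi>)\<close> (these determine eta uniquely on the
  edge set of the closure of S).\<close>
definition gen_flow :: "point set \<Rightarrow> (point \<Rightarrow> real) \<Rightarrow> (edge \<Rightarrow> real) \<Rightarrow> bool" where
  "gen_flow S \<xi> \<eta> \<longleftrightarrow>
     (\<forall>y\<in>S.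
        (fst (e_sw y) \<notin> S \<longrightarrow> \<eta> (e_sw y) = 0) \<and>
        (fst (e_nw y) \<notin> S \<longrightarrow> \<eta> (e_nw y) = 0) \<and>
        \<eta> (e_ne y) = \<xi> y + max 0 (\<eta> (e_sw y) - \<eta> (e_nw y)) \<and>
        \<eta> (e_se y) = \<xi> y + max 0 (\<eta> (e_nw y) - \<eta> (e_sw y)))"

definition assoc :: "(edge \<Rightarrow> real) \<Rightarrow> (point \<Rightarrow> real) \<Rightarrow> point \<Rightarrow> edge \<Rightarrow> real \<Rightarrow> edge \<Rightarrow> real \<Rightarrow> bool" where
  "assoc \<eta> \<xi> y f1 p1 f2 p2 \<longleftrightarrow>
     f1 \<in> {e_sw y, e_se y} \<and> 0 < p1 \<and> p1 \<le> \<eta> f1 \<and>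
     f2 \<in> {e_nw y, e_ne y} \<and> 0 < p2 \<and> p2 \<le> \<eta> f2 \<and>
     ((f1 = e_sw y \<and> f2 = e_nw y \<and> p1 \<le> min (\<eta> f1) (\<eta> f2) \<and> p2 = p1) \<or>
      (f1 = e_se y \<and> f2 = e_nw y \<and> p2 > \<eta> (e_sw y) \<and> p1 = p2 - \<eta> (e_sw y)) \<or>
      (f1 = e_sw y \<and> f2 = e_ne y \<and> p1 > \<eta> (e_nw y) \<and> p2 = p1 - \<eta> (e_nw y)) \<or>
      (f1 = e_se y \<and> f2 = e_ne y \<and> p1 > \<eta> f1 - \<xi> y \<and> p2 > \<eta> f2 - \<xi> y \<and>
         \<eta> f1 - p1 = \<eta> f2 - p2))"

text \<open>A broken trace (y_0,...,y_n), n \<ge> 1, is represented by its list of points;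
  the edges are determined by consecutive points.\<close>
definition broken_trace :: "point list \<Rightarrow> bool" where
  "broken_trace ys \<longleftrightarrow> 2 \<le> length ys \<and>
     (\<forall>i. i + 1 < length ys \<longrightarrow>
        snd (ys ! (i + 1)) = snd (ys ! i) + 1 \<and> \<bar>fst (ys ! (i + 1)) - fst (ys ! i)\<bar> = 1)"

definition tr_edge :: "point \<Rightarrow> point \<Rightarrow> edge" where
  "tr_edge u v = (if fst u < fst v then (u, v) else (v, u))"

text \<open>The i-th edge e_{i+1} = <y_i, y_{i+1}> of the trace (0-based).\<close>
definition trace_edge :: "point list \<Rightarrow> nat \<Rightarrow> edge" where
  "trace_edge ys i = tr_edge (ys ! i) (ys ! (i + 1))"

definition trace_in :: "point set \<Rightarrow> point list \<Rightarrow> bool" where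
  "trace_in S ys \<longleftrightarrow> broken_trace ys \<and>
     hd ys \<in> closure_dom S \<and> last ys \<in> closure_dom S \<and>
     (\<forall>i. 0 < i \<and> i + 1 < length ys \<longrightarrow> ys ! i \<in> S) \<and>
     (\<forall>i. i + 1 < length ys \<longrightarrow> trace_edge ys i \<in> edges_dom S)"

definition crossing_traces :: "point set \<Rightarrow> point list set" where
  "crossing_traces S = {ys. trace_in S ys \<and> hd ys \<in> bdry_dom S \<and> last ys \<in> bdry_dom S}"

definition weight :: "(edge \<Rightarrow> real) \<Rightarrow> (point \<Rightarrow> real) \<Rightarrow> point list \<Rightarrow> real" where
  "weight \<eta> \<xi> ys = measure lborel
     {p. 0 < p \<and> p \<le> \<eta> (trace_edge ys 0) \<and>
        (\<exists>ps :: real list. length ps = length ys - 1 \<and> ps ! 0 = p \<and>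
           (\<forall>i < length ys - 1. 0 < ps ! i \<and> ps ! i \<le> \<eta> (trace_edge ys i)) \<and>
           (\<forall>i. 1 \<le> i \<and> i < length ys - 1 \<longrightarrow>
              assoc \<eta> \<xi> (ys ! i) (trace_edge ys (i - 1)) (ps ! (i - 1)) (trace_edge ys i) (ps ! i)))}"

definition H_S :: "point set \<Rightarrow> (edge \<Rightarrow> real) \<Rightarrow> (point \<Rightarrow> real) \<Rightarrow> real" where
  "H_S S \<eta> \<xi> = (\<Sum>l\<in>crossing_traces S. weight \<eta> \<xi> l)"

definition bottom_pt :: "point set \<Rightarrow> point" where
  "bottom_pt S = (THE y. y \<in> S \<and> (\<forall>z\<in>S. fst y \<le> fst z))"

definition top_pt :: "point set \<Rightarrow> point" where
  "top_pt S = (THE y. y \<in> S \<and> (\<forall>z\<in>S. fst z \<le> fst y))"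

definition up_paths :: "point set \<Rightarrow> point list set" where
  "up_paths S = {\<pi>. \<pi> \<noteq> [] \<and> set \<pi> \<subseteq> S \<and> hd \<pi> = bottom_pt S \<and> last \<pi> = top_pt S \<and>
     (\<forall>i. i + 1 < length \<pi> \<longrightarrow>
        \<pi> ! (i + 1) - \<pi> ! i \<in> {(1, 1), (1, -1)})}"

definition G_S :: "point set \<Rightarrow> (point \<Rightarrow> real) \<Rightarrow> real" where
  "G_S S \<xi> = Max ((\<lambda>\<pi>. sum_list (map \<xi> \<pi>)) ` up_paths S)"

end

theory Submission
  imports Defs
begin


fun F :: "(nat \<Rightarrow> nat \<Rightarrow> real) \<Rightarrow> nat \<Rightarrow> nat \<Rightarrow> real" where
  "F g 0 0 = g 0 0"
| "F g (Suc i) 0 = g (Suc i) 0 + F g i 0"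
| "F g 0 (Suc j) = g 0 (Suc j) + F g 0 j"
| "F g (Suc i) (Suc j) = g (Suc i) (Suc j) + max (F g i (Suc j)) (F g (Suc i) j)"

definition "Fl g i j = (if i = 0 then 0 else F g (i-1) j)"
definition "Fb g i j = (if j = 0 then 0 else F g i (j-1))"

lemma F_nonneg: "(\<And>i j. 0 \<le> g i j) \<Longrightarrow> 0 \<le> F g i j"
  by (induction g i j rule: F.induct) (auto simp: max_def)

lemma F_eq: "(\<And>i j. 0 \<le> g i j) \<Longrightarrow> F g i j = g i j + max (Fl g i j) (Fb g i j)"
proof -
  assume g: "\<And>i j. 0 \<le> g i j"
  note nn = F_nonneg[of g, OF g]
  show ?thesis by (cases i; cases j) (auto simp: Fl_def Fb_def max_def intro: antisym nn)
qed

lemma F_ge_Fl: "(\<And>i j. 0 \<le> g i j) \<Longrightarrow> Fl g i j + g i j \<le> F g i j"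
  using F_eq[of g i j] by auto
lemma F_ge_Fb: "(\<And>i j. 0 \<le> g i j) \<Longrightarrow> Fb g i j + g i j \<le> F g i j"
  using F_eq[of g i j] by auto

locale grid =
  fixes a b c d :: int
  assumes ea: "even a" and eb: "even b" and ec: "even c" and ed: "even d"
    and ab: "a \<le> b" and cd: "c \<le> d"
begin

definition "pt i j = ((a+c) div 2 + int i + int j, (a - c) div 2 + int i - int j)"
definition "mm = nat ((b - a) div 2)"
definition "nn = nat ((d - c) div 2)"

lemma pt_s: "fst (pt i j) + snd (pt i j) = a + 2 * int i"
  using ea ec unfolding pt_def by auto
lemma pt_r: "fst (pt i j) - snd (pt i j) = c + 2 * int j"
  using ea ec unfolding pt_def by auto

lemma pt_in: "pt i j \<in> rect a b c d \<longleftrightarrow> i \<le> mm \<and> j \<le> nn"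
proof -
  obtain t x where e: "pt i j = (t,x)" by force
  have h: "t+x = a+2*int i" "t-x = c + 2*int j" using pt_s[of i j] pt_r[of i j] e by auto
  have "even (t+x)" using h ea by auto
  moreover obtain k where k: "b - a = 2*k" using ea eb by (metis dvd_diff evenE)
  moreover obtain l where l: "d - c = 2*l" using ec ed by (metis dvd_diff evenE)
  moreover have "(a \<le> t+x \<and> t+x \<le> b) \<longleftrightarrow> i \<le> mm" using h k ab unfolding mm_def by auto
  moreover have "(c \<le> t-x \<and> t-x \<le> d) \<longleftrightarrow> j \<le> nn" using h l cd unfolding nn_def by auto
  ultimately show ?thesis unfolding rect_def e by auto
qed

lemma pt_inj: "pt i j = pt i' j' \<longleftrightarrow> i = i' \<and> j = j'"
  using pt_s[of i j] pt_r[of i j] pt_s[of i' j'] pt_r[of i' j'] by (auto)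

lemma S_pt: assumes "z \<in> rect a b c d" shows "\<exists>i j. z = pt i j \<and> i \<le> mm \<and> j \<le> nn"
proof -
  obtain t x where z: "z = (t,x)" by force
  have h: "even (t+x)" "a \<le> t+x" "t+x \<le> b" "c \<le> t-x" "t-x \<le> d" using assms z unfolding rect_def by auto
  define i where "i = nat ((t+x-a) div 2)"
  define j where "j = nat ((t-x-c) div 2)"
  have "fst (pt i j) + snd (pt i j) = t + x" unfolding pt_s i_def using h ea by auto
  moreover have "fst (pt i j) - snd (pt i j) = t - x" unfolding pt_r j_def using h ec by auto
  ultimately have "pt i j = z" using z by (cases "pt i j") auto
  moreover have "pt i j \<in> rect a b c d" using assms \<open>pt i j = z\<close> by simp
  ultimately show ?thesis using pt_in by blast
qed

lemma pt_ne: "pt (Suc i) j = (fst (pt i j) + 1, snd (pt i j) + 1)"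
  unfolding pt_def by auto
lemma pt_se: "pt i (Suc j) = (fst (pt i j) + 1, snd (pt i j) - 1)"
  unfolding pt_def by auto

lemma e_sw_pt: "e_sw (pt (Suc i) j) = e_ne (pt i j)"
  unfolding e_sw_def e_ne_def pt_def by auto
lemma e_nw_pt: "e_nw (pt i (Suc j)) = e_se (pt i j)"
  unfolding e_nw_def e_se_def pt_def by auto
lemma e_sw_0: "fst (e_sw (pt 0 j)) \<notin> rect a b c d"
  using pt_s[of 0 j] unfolding e_sw_def rect_def by auto
lemma e_nw_0: "fst (e_nw (pt i 0)) \<notin> rect a b c d"
  using pt_r[of i 0] unfolding e_nw_def rect_def by auto

lemma fst_pt: "fst (pt i j) = (a+c) div 2 + int i + int j"
  unfolding pt_def by simp

lemma bottom_eq: "bottom_pt (rect a b c d) = pt 0 0"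
  unfolding bottom_pt_def
proof (rule the_equality)
  show "pt 0 0 \<in> rect a b c d \<and> (\<forall>z\<in>rect a b c d. fst (pt 0 0) \<le> fst z)"
    using pt_in[of 0 0] S_pt fst_pt by fastforce
next
  fix y assume y: "y \<in> rect a b c d \<and> (\<forall>z\<in>rect a b c d. fst y \<le> fst z)"
  then obtain i j where "y = pt i j" using S_pt by blast
  moreover have "fst y \<le> fst (pt 0 0)" using y pt_in[of 0 0] by auto
  ultimately show "y = pt 0 0" using fst_pt pt_inj by auto
qed

lemma top_eq: "top_pt (rect a b c d) = pt mm nn"
  unfolding top_pt_def
proof (rule the_equality)
  show "pt mm nn \<in> rect a b c d \<and> (\<forall>z\<in>rect a b c d. fst z \<le> fst (pt mm nn))"
    using pt_in[of mm nn] S_pt fst_pt by fastforce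
next
  fix y assume y: "y \<in> rect a b c d \<and> (\<forall>z\<in>rect a b c d. fst z \<le> fst y)"
  then obtain i j where "y = pt i j" "i \<le> mm" "j \<le> nn" using S_pt by blast
  moreover have "fst (pt mm nn) \<le> fst y" using y pt_in[of mm nn] by auto
  ultimately show "y = pt mm nn" using fst_pt pt_inj by auto
qed

definition "steps \<pi> \<longleftrightarrow> (\<forall>i. i + 1 < length \<pi> \<longrightarrow> \<pi> ! (i + 1) - \<pi> ! i \<in> {(1, 1), (1, -1)})"

lemma steps_append: "steps (xs @ [z]) \<longleftrightarrow> steps xs \<and> (xs \<noteq> [] \<longrightarrow> z - last xs \<in> {(1,1),(1,-1)})"
proof -
  have "steps (xs @ [z]) \<longleftrightarrow> (\<forall>i. i + 1 < length xs \<longrightarrow> xs ! (i + 1) - xs ! i \<in> {(1, 1), (1, -1)})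
     \<and> (xs \<noteq> [] \<longrightarrow> z - last xs \<in> {(1,1),(1,-1)})" (is "?L \<longleftrightarrow> ?R")
  proof
    assume L: ?L
    show ?R
    proof (intro conjI allI impI)
      fix i assume "i + 1 < length xs"
      then show "xs ! (i + 1) - xs ! i \<in> {(1, 1), (1, -1)}" using L[unfolded steps_def, rule_format, of i]
        by (auto simp: nth_append)
    next
      assume "xs \<noteq> []"
      then show "z - last xs \<in> {(1,1),(1,-1)}" using L[unfolded steps_def, rule_format, of "length xs - 1"]
        by (auto simp: nth_append last_conv_nth)
    qed
  next
    assume R: ?R
    show ?L unfolding steps_def
    proof (intro allI impI)
      fix i assume i: "i + 1 < length (xs @ [z])"
      show "(xs @ [z]) ! (i + 1) - (xs @ [z]) ! i \<in> {(1, 1), (1, -1)}"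
      proof (cases "i + 1 < length xs")
        case True then show ?thesis using R by (auto simp: nth_append)
      next
        case False then have "i = length xs - 1" "xs \<noteq> []" using i by auto
        then show ?thesis using R by (auto simp: nth_append last_conv_nth)
      qed
    qed
  qed
  then show ?thesis unfolding steps_def by simp
qed

lemma step_pt: "z - pt i j \<in> {(1,1),(1,-1)} \<Longrightarrow> z = pt (Suc i) j \<or> z = pt i (Suc j)"
proof -
  assume h: "z - pt i j \<in> {(1,1),(1,-1)}"
  obtain t x where e: "pt i j = (t,x)" by force
  show ?thesis using h pt_ne[of i j] pt_se[of i j] e by (cases z) auto
qed

end

locale flow = grid +
  fixes \<xi> :: "point \<Rightarrow> real" and \<eta> :: "edge \<Rightarrow> real"
  assumes xi_nn: "\<forall>y\<in>rect a b c d. 0 \<le> \<xi> y"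
    and gf: "gen_flow (rect a b c d) \<xi> \<eta>"
begin

definition "gg i j = (if i \<le> mm \<and> j \<le> nn then \<xi> (pt i j) else 0)"

lemma gg_nn: "0 \<le> gg i j"
  unfolding gg_def using xi_nn pt_in by auto

lemma flow_closed:
  "i \<le> mm \<Longrightarrow> j \<le> nn \<Longrightarrow> \<eta> (e_ne (pt i j)) = F gg i j - Fb gg i j \<and> \<eta> (e_se (pt i j)) = F gg i j - Fl gg i j"
proof (induction "i+j" arbitrary: i j rule: less_induct)
  case less
  let ?y = "pt i j"
  have yS: "?y \<in> rect a b c d" using less pt_in by auto
  have G: "\<eta> (e_ne ?y) = \<xi> ?y + max 0 (\<eta> (e_sw ?y) - \<eta> (e_nw ?y))"
      "\<eta> (e_se ?y) = \<xi> ?y + max 0 (\<eta> (e_nw ?y) - \<eta> (e_sw ?y))"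
    using gf yS unfolding gen_flow_def by auto
  have A: "\<eta> (e_sw ?y) = Fl gg i j - (if i = 0 \<or> j = 0 then 0 else F gg (i-1) (j-1))"
  proof (cases i)
    case 0 then show ?thesis using gf yS e_sw_0[of j] unfolding gen_flow_def Fl_def by auto
  next
    case (Suc i')
    have "\<eta> (e_ne (pt i' j)) = F gg i' j - Fb gg i' j" using less(1)[of i' j] less Suc by auto
    then show ?thesis using Suc e_sw_pt[of i' j] unfolding Fl_def Fb_def by auto
  qed
  have B: "\<eta> (e_nw ?y) = Fb gg i j - (if i = 0 \<or> j = 0 then 0 else F gg (i-1) (j-1))"
  proof (cases j)
    case 0 then show ?thesis using gf yS e_nw_0[of i] unfolding gen_flow_def Fb_def by auto
  next
    case (Suc j')
    have "\<eta> (e_se (pt i j')) = F gg i j' - Fl gg i j'" using less(1)[of i j'] less Suc by auto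
    then show ?thesis using Suc e_nw_pt[of i j'] unfolding Fl_def Fb_def by auto
  qed
  have gy: "gg i j = \<xi> ?y" unfolding gg_def using less by auto
  have FE: "F gg i j = gg i j + max (Fl gg i j) (Fb gg i j)" by (rule F_eq[OF gg_nn])
  show ?case using G A B gy FE by (auto simp: max_def)
qed

lemma path_bound:
  "\<pi> \<noteq> [] \<Longrightarrow> set \<pi> \<subseteq> rect a b c d \<Longrightarrow> hd \<pi> = pt 0 0 \<Longrightarrow> steps \<pi> \<Longrightarrow> last \<pi> = pt i j \<Longrightarrow>
    sum_list (map \<xi> \<pi>) \<le> F gg i j \<and> length \<pi> = i + j + 1"
proof (induction \<pi> arbitrary: i j rule: rev_induct)
  case Nil then show ?case by simp
next
  case (snoc z xs)
  show ?case
  proof (cases "xs = []")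
    case True
    then have "z = pt 0 0" using snoc by simp
    then have "i = 0" "j = 0" using snoc pt_inj by auto
    then show ?thesis using True \<open>z = pt 0 0\<close> by (simp add: gg_def)
  next
    case False
    have st: "steps xs" "z - last xs \<in> {(1,1),(1,-1)}" using steps_append[of xs z] snoc(5) False by auto
    have "last xs \<in> rect a b c d" using snoc(3) False by auto
    then obtain i' j' where w: "last xs = pt i' j'" "i' \<le> mm" "j' \<le> nn" using S_pt by blast
    have IH: "sum_list (map \<xi> xs) \<le> F gg i' j' \<and> length xs = i' + j' + 1"
      using snoc(1)[OF False _ _ st(1) w(1)] snoc(3,4) False by auto
    have zS: "z \<in> rect a b c d" using snoc(3) by auto
    have z: "z = pt i j" using snoc by simp
    have gz: "gg i j = \<xi> z" using z zS pt_in unfolding gg_def by auto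
    from step_pt[OF st(2)[unfolded w]] z
    have "(i = Suc i' \<and> j = j') \<or> (i = i' \<and> j = Suc j')" using pt_inj by auto
    then show ?thesis
    proof
      assume h: "i = Suc i' \<and> j = j'"
      then have "F gg i' j' + gg i j \<le> F gg i j" using F_ge_Fl[of gg i j, OF gg_nn] by (simp add: Fl_def)
      then show ?thesis using IH gz h by simp
    next
      assume h: "i = i' \<and> j = Suc j'"
      then have "F gg i' j' + gg i j \<le> F gg i j" using F_ge_Fb[of gg i j, OF gg_nn] by (simp add: Fb_def)
      then show ?thesis using IH gz h by simp
    qed
  qed
qed

lemma path_exists:
  "i \<le> mm \<Longrightarrow> j \<le> nn \<Longrightarrow> \<exists>\<pi>. \<pi> \<noteq> [] \<and> set \<pi> \<subseteq> rect a b c d \<and> hd \<pi> = pt 0 0 \<and> steps \<pi> \<and>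
     last \<pi> = pt i j \<and> sum_list (map \<xi> \<pi>) = F gg i j"
proof (induction "i+j" arbitrary: i j rule: less_induct)
  case less
  have gz: "gg i j = \<xi> (pt i j)" using less unfolding gg_def by auto
  have FE: "F gg i j = gg i j + max (Fl gg i j) (Fb gg i j)" by (rule F_eq[OF gg_nn])
  have ptS: "pt i j \<in> rect a b c d" using less pt_in by auto
  show ?case
  proof (cases "i = 0 \<and> j = 0")
    case True
    then show ?thesis using ptS gz FE by (intro exI[of _ "[pt 0 0]"]) (auto simp: steps_def Fl_def Fb_def)
  next
    case False
    show ?thesis
    proof (cases "i > 0 \<and> Fb gg i j \<le> Fl gg i j")
      case True
      then obtain i' where i': "i = Suc i'" by (cases i) auto
      have "\<exists>\<pi>. \<pi> \<noteq> [] \<and> set \<pi> \<subseteq> rect a b c d \<and> hd \<pi> = pt 0 0 \<and> steps \<pi> \<and>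
        last \<pi> = pt i' j \<and> sum_list (map \<xi> \<pi>) = F gg i' j" by (rule less(1)) (use less i' in auto)
      then obtain \<pi> where p: "\<pi> \<noteq> [] \<and> set \<pi> \<subseteq> rect a b c d \<and> hd \<pi> = pt 0 0 \<and> steps \<pi> \<and>
        last \<pi> = pt i' j \<and> sum_list (map \<xi> \<pi>) = F gg i' j" by blast
      have "pt i j - pt i' j = (1,1)" using pt_ne[of i' j] i' by (cases "pt i' j") auto
      then have "steps (\<pi> @ [pt i j])" using p steps_append[of \<pi> "pt i j"] by auto
      moreover have "F gg i j = F gg i' j + \<xi> (pt i j)" using FE True gz i' by (auto simp: Fl_def max_def)
      ultimately show ?thesis using p ptS by (intro exI[of _ "\<pi> @ [pt i j]"]) auto
    next
      case False2: False
      then have "Fl gg i j < Fb gg i j \<or> i = 0" by auto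
      moreover have "0 \<le> Fl gg i j" using F_nonneg[of gg, OF gg_nn] by (simp add: Fl_def)
      ultimately have "j \<noteq> 0" using False by (auto simp: Fb_def split: if_splits)
      then have "j > 0" by simp
      then obtain j' where j': "j = Suc j'" by (cases j) auto
      have "\<exists>\<pi>. \<pi> \<noteq> [] \<and> set \<pi> \<subseteq> rect a b c d \<and> hd \<pi> = pt 0 0 \<and> steps \<pi> \<and>
        last \<pi> = pt i j' \<and> sum_list (map \<xi> \<pi>) = F gg i j'" by (rule less(1)) (use less j' in auto)
      then obtain \<pi> where p: "\<pi> \<noteq> [] \<and> set \<pi> \<subseteq> rect a b c d \<and> hd \<pi> = pt 0 0 \<and> steps \<pi> \<and>
        last \<pi> = pt i j' \<and> sum_list (map \<xi> \<pi>) = F gg i j'" by blast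
      have "pt i j - pt i j' = (1,-1)" using pt_se[of i j'] j' by (cases "pt i j'") auto
      then have "steps (\<pi> @ [pt i j])" using p steps_append[of \<pi> "pt i j"] by auto
      moreover have "F gg i j = F gg i j' + \<xi> (pt i j)" using FE False2 gz j' F_nonneg[of gg, OF gg_nn]
        by (auto simp: Fl_def Fb_def max_def)
      ultimately show ?thesis using p ptS by (intro exI[of _ "\<pi> @ [pt i j]"]) auto
    qed
  qed
qed

lemma finite_S: "finite (rect a b c d)"
proof -
  have "rect a b c d \<subseteq> (\<lambda>(i,j). pt i j) ` ({..mm} \<times> {..nn})"
    using S_pt by fastforce
  then show ?thesis by (rule finite_subset) auto
qed

lemma G_eq: "G_S (rect a b c d) \<xi> = F gg mm nn"
proof -
  have up: "up_paths (rect a b c d) = {\<pi>. \<pi> \<noteq> [] \<and> set \<pi> \<subseteq> rect a b c d \<and> hd \<pi> = pt 0 0 \<and>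
      last \<pi> = pt mm nn \<and> steps \<pi>}"
    unfolding up_paths_def bottom_eq top_eq steps_def by auto
  have fin: "finite (up_paths (rect a b c d))"
  proof (rule finite_subset)
    show "up_paths (rect a b c d) \<subseteq> {xs. set xs \<subseteq> rect a b c d \<and> length xs = mm + nn + 1}"
      unfolding up using path_bound by blast
    show "finite {xs. set xs \<subseteq> rect a b c d \<and> length xs = mm + nn + 1}"
      by (rule finite_lists_length_eq[OF finite_S])
  qed
  show ?thesis unfolding G_S_def
  proof (rule Max_eqI)
    show "finite ((\<lambda>\<pi>. sum_list (map \<xi> \<pi>)) ` up_paths (rect a b c d))" using fin by simp
    show "\<And>y. y \<in> (\<lambda>\<pi>. sum_list (map \<xi> \<pi>)) ` up_paths (rect a b c d) \<Longrightarrow> y \<le> F gg mm nn"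
      unfolding up using path_bound by blast
    obtain \<pi> where "\<pi> \<noteq> [] \<and> set \<pi> \<subseteq> rect a b c d \<and> hd \<pi> = pt 0 0 \<and> steps \<pi> \<and>
     last \<pi> = pt mm nn \<and> sum_list (map \<xi> \<pi>) = F gg mm nn" using path_exists by blast
    then show "F gg mm nn \<in> (\<lambda>\<pi>. sum_list (map \<xi> \<pi>)) ` up_paths (rect a b c d)"
      unfolding up by (intro image_eqI[of _ _ \<pi>]) auto
  qed
qed

end



definition Wset :: "(edge \<Rightarrow> real) \<Rightarrow> (point \<Rightarrow> real) \<Rightarrow> point list \<Rightarrow> real set" where
  "Wset \<eta> \<xi> ys =
     {p. 0 < p \<and> p \<le> \<eta> (trace_edge ys 0) \<and>
        (\<exists>ps :: real list. length ps = length ys - 1 \<and> ps ! 0 = p \<and>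
           (\<forall>i < length ys - 1. 0 < ps ! i \<and> ps ! i \<le> \<eta> (trace_edge ys i)) \<and>
           (\<forall>i. 1 \<le> i \<and> i < length ys - 1 \<longrightarrow>
              assoc \<eta> \<xi> (ys ! i) (trace_edge ys (i - 1)) (ps ! (i - 1)) (trace_edge ys i) (ps ! i)))}"

lemma weight_W: "weight \<eta> \<xi> ys = measure lborel (Wset \<eta> \<xi> ys)"
  unfolding weight_def Wset_def by simp

lemma edges_distinct: "e_sw y \<noteq> e_se y" "e_nw y \<noteq> e_ne y"
  by (auto simp: e_sw_def e_se_def e_nw_def e_ne_def prod_eq_iff)

lemma cc_gt: "(c::real) < x \<Longrightarrow> c < y \<Longrightarrow> 0 \<le> u \<Longrightarrow> 0 \<le> v \<Longrightarrow> u + v = 1 \<Longrightarrow> c < u * x + v * y"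
  using convex_bound_lt[of "-x" "-c" "-y" u v] by (simp add: algebra_simps)

lemma cc_le: "(x::real) \<le> c \<Longrightarrow> y \<le> c \<Longrightarrow> 0 \<le> u \<Longrightarrow> 0 \<le> v \<Longrightarrow> u + v = 1 \<Longrightarrow> u * x + v * y \<le> c"
  by (rule convex_bound_le)

lemma cc_shift: "u + v = 1 \<Longrightarrow> u * (x + K) + v * (y + K) = u * x + v * y + (K::real)"
proof -
  assume "u + v = 1"
  have "u * (x + K) + v * (y + K) = u * x + v * y + (u + v) * K" by (simp add: algebra_simps)
  then show ?thesis using \<open>u + v = 1\<close> by simp
qed

lemma assoc_conv:
  assumes A: "assoc \<eta> \<xi> y f1 a1 f2 a2" and B: "assoc \<eta> \<xi> y f1 b1 f2 b2"
    and u: "0 \<le> u" "0 \<le> v" "u + v = 1"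
  shows "assoc \<eta> \<xi> y f1 (u * a1 + v * b1) f2 (u * a2 + v * b2)"
proof -
  note d = edges_distinct[of y]
  have f: "f1 \<in> {e_sw y, e_se y}" "f2 \<in> {e_nw y, e_ne y}" using A by (auto simp: assoc_def)
  have gen: "0 < u * a1 + v * b1" "u * a1 + v * b1 \<le> \<eta> f1" "0 < u * a2 + v * b2" "u * a2 + v * b2 \<le> \<eta> f2"
    using A B u by (auto simp: assoc_def intro!: cc_gt cc_le)
  consider "f1 = e_sw y" "f2 = e_nw y" | "f1 = e_se y" "f2 = e_nw y" | "f1 = e_sw y" "f2 = e_ne y"
    | "f1 = e_se y" "f2 = e_ne y" using f by auto
  then show ?thesis
  proof cases
    case 1
    then have h: "a1 \<le> \<eta> f2" "a2 = a1" "b1 \<le> \<eta> f2" "b2 = b1" using A B d by (auto simp: assoc_def)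
    have "u * a1 + v * b1 \<le> \<eta> f2" using h u by (auto intro!: cc_le)
    then have dj: "f1 = e_sw y \<and> f2 = e_nw y \<and> u * a1 + v * b1 \<le> min (\<eta> f1) (\<eta> f2) \<and> u * a2 + v * b2 = u * a1 + v * b1"
      using 1 gen h by auto
    show ?thesis unfolding assoc_def using f gen dj by blast
  next
    case 2
    then have h: "\<eta> (e_sw y) < a2" "a2 = a1 + \<eta> (e_sw y)" "\<eta> (e_sw y) < b2" "b2 = b1 + \<eta> (e_sw y)"
      using A B d by (auto simp: assoc_def)
    have "\<eta> (e_sw y) < u * a2 + v * b2" using h u by (auto intro!: cc_gt)
    moreover have "u * a1 + v * b1 = u * a2 + v * b2 - \<eta> (e_sw y)"
      using h cc_shift[OF u(3), of a1 "\<eta> (e_sw y)" b1] by simp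
    ultimately have dj: "f1 = e_se y \<and> f2 = e_nw y \<and> u * a2 + v * b2 > \<eta> (e_sw y) \<and> u * a1 + v * b1 = u * a2 + v * b2 - \<eta> (e_sw y)"
      using 2 by auto
    show ?thesis unfolding assoc_def using f gen dj by blast
  next
    case 3
    then have h: "\<eta> (e_nw y) < a1" "a1 = a2 + \<eta> (e_nw y)" "\<eta> (e_nw y) < b1" "b1 = b2 + \<eta> (e_nw y)"
      using A B d by (auto simp: assoc_def)
    have "\<eta> (e_nw y) < u * a1 + v * b1" using h u by (auto intro!: cc_gt)
    moreover have "u * a2 + v * b2 = u * a1 + v * b1 - \<eta> (e_nw y)"
      using h cc_shift[OF u(3), of a2 "\<eta> (e_nw y)" b2] by simp
    ultimately have dj: "f1 = e_sw y \<and> f2 = e_ne y \<and> u * a1 + v * b1 > \<eta> (e_nw y) \<and> u * a2 + v * b2 = u * a1 + v * b1 - \<eta> (e_nw y)"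
      using 3 by auto
    show ?thesis unfolding assoc_def using f gen dj by blast
  next
    case 4
    then have h: "\<eta> f1 - \<xi> y < a1" "\<eta> f2 - \<xi> y < a2" "a2 = a1 + (\<eta> f2 - \<eta> f1)"
      "\<eta> f1 - \<xi> y < b1" "\<eta> f2 - \<xi> y < b2" "b2 = b1 + (\<eta> f2 - \<eta> f1)"
      using A B d by (auto simp: assoc_def)
    have e: "u * a2 + v * b2 = u * a1 + v * b1 + (\<eta> f2 - \<eta> f1)"
      using h cc_shift[OF u(3), of a1 "\<eta> f2 - \<eta> f1" b1] by simp
    have "\<eta> f1 - \<xi> y < u * a1 + v * b1" "\<eta> f2 - \<xi> y < u * a2 + v * b2"
      using h u by (auto intro!: cc_gt)
    then have dj: "f1 = e_se y \<and> f2 = e_ne y \<and> u * a1 + v * b1 > \<eta> f1 - \<xi> y \<and> u * a2 + v * b2 > \<eta> f2 - \<xi> y \<and>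
         \<eta> f1 - (u * a1 + v * b1) = \<eta> f2 - (u * a2 + v * b2)"
      using 4 e by auto
    show ?thesis unfolding assoc_def using f gen dj by blast
  qed
qed

lemma Wset_convex: "convex (Wset \<eta> \<xi> ys)"
proof (rule convexI)
  fix p q u v :: real
  assume p: "p \<in> Wset \<eta> \<xi> ys" and q: "q \<in> Wset \<eta> \<xi> ys" and u: "0 \<le> u" "0 \<le> v" "u + v = 1"
  let ?n = "length ys - 1"
  let ?E = "\<lambda>i. trace_edge ys i"
  obtain ps where ps: "length ps = ?n" "ps ! 0 = p" "\<forall>i < ?n. 0 < ps ! i \<and> ps ! i \<le> \<eta> (?E i)"
    "\<forall>i. 1 \<le> i \<and> i < ?n \<longrightarrow> assoc \<eta> \<xi> (ys ! i) (?E (i - 1)) (ps ! (i - 1)) (?E i) (ps ! i)"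
    and p0: "0 < p" "p \<le> \<eta> (?E 0)"
    using p unfolding Wset_def by blast
  obtain qs where qs: "length qs = ?n" "qs ! 0 = q" "\<forall>i < ?n. 0 < qs ! i \<and> qs ! i \<le> \<eta> (?E i)"
    "\<forall>i. 1 \<le> i \<and> i < ?n \<longrightarrow> assoc \<eta> \<xi> (ys ! i) (?E (i - 1)) (qs ! (i - 1)) (?E i) (qs ! i)"
    and q0: "0 < q" "q \<le> \<eta> (?E 0)"
    using q unfolding Wset_def by blast
  define rs where "rs = map (\<lambda>i. u * ps ! i + v * qs ! i) [0..<?n]"
  have rsn: "\<And>i. i < ?n \<Longrightarrow> rs ! i = u * ps ! i + v * qs ! i" unfolding rs_def by simp
  have c1: "length rs = ?n" unfolding rs_def by simp
  have c2: "?n > 0 \<Longrightarrow> rs ! 0 = u * p + v * q" using rsn[of 0] ps qs by simp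
  have c3: "\<forall>i < ?n. 0 < rs ! i \<and> rs ! i \<le> \<eta> (?E i)"
    using ps(3) qs(3) u rsn by (auto intro!: cc_gt cc_le)
  have c4: "\<forall>i. 1 \<le> i \<and> i < ?n \<longrightarrow> assoc \<eta> \<xi> (ys ! i) (?E (i - 1)) (rs ! (i - 1)) (?E i) (rs ! i)"
    using ps(4) qs(4) u rsn by (auto intro!: assoc_conv)
  have c5: "0 < u * p + v * q" "u * p + v * q \<le> \<eta> (?E 0)" using p0 q0 u by (auto intro!: cc_gt cc_le)
  show "u *\<^sub>R p + v *\<^sub>R q \<in> Wset \<eta> \<xi> ys"
  proof (cases "?n > 0")
    case True
    then show ?thesis using c1 c2 c3 c4 c5 unfolding Wset_def by (auto intro!: exI[of _ rs])
  next
    case False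
    then have "ps = []" "qs = []" using ps(1) qs(1) by auto
    then have "p = q" using ps(2) qs(2) by simp
    then have "u * p + v * q = (u + v) * p" by (simp add: algebra_simps)
    then have "u * p + v * q = p" using u(3) by simp
    then show ?thesis using p by simp
  qed
qed

lemma Wset_meas: "Wset \<eta> \<xi> ys \<in> sets lborel"
  using Wset_convex[of \<eta> \<xi> ys] is_interval_convex_1 real_interval_borel_measurable by auto


lemma tr_up: "fst v = fst u + 1 \<Longrightarrow> snd v = snd u + 1 \<Longrightarrow> tr_edge u v = e_ne u \<and> tr_edge u v = e_sw v"
  by (cases u; cases v) (auto simp: tr_edge_def e_ne_def e_sw_def)
lemma tr_down: "fst v = fst u - 1 \<Longrightarrow> snd v = snd u + 1 \<Longrightarrow> tr_edge u v = e_nw u \<and> tr_edge u v = e_se v"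
  by (cases u; cases v) (auto simp: tr_edge_def e_nw_def e_se_def)
lemma tr_inj: "tr_edge u v = tr_edge u v' \<Longrightarrow> v \<noteq> u \<Longrightarrow> v' \<noteq> u \<Longrightarrow> v = v'"
  by (auto simp: tr_edge_def split: if_splits)
lemma tr_ends: "fst (tr_edge u v) \<in> {u, v}" "snd (tr_edge u v) \<in> {u, v}"
  by (auto simp: tr_edge_def)

lemma bt_step: "broken_trace ys \<Longrightarrow> i + 1 < length ys \<Longrightarrow>
   snd (ys ! (i+1)) = snd (ys ! i) + 1 \<and> (fst (ys ! (i+1)) = fst (ys ! i) + 1 \<or> fst (ys ! (i+1)) = fst (ys ! i) - 1)"
  unfolding broken_trace_def by (auto simp: abs_if split: if_splits)

lemma bt_snd: "broken_trace ys \<Longrightarrow> i < length ys \<Longrightarrow> snd (ys ! i) = snd (ys ! 0) + int i"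
proof (induction i)
  case 0 then show ?case by simp
next
  case (Suc i) then show ?case using bt_step[of ys i] by auto
qed

lemma sw_ne: "e_sw y = e_ne (fst (e_sw y))" by (simp add: e_sw_def e_ne_def)
lemma nw_se: "e_nw y = e_se (fst (e_nw y))" by (simp add: e_nw_def e_se_def)

lemma te_app: "i + 1 < length ys \<Longrightarrow> trace_edge (ys @ zs) i = trace_edge ys i"
  by (simp add: trace_edge_def nth_append)
lemma te_last: "ys \<noteq> [] \<Longrightarrow> trace_edge (ys @ [v]) (length ys - 1) = tr_edge (last ys) v"
  by (simp add: trace_edge_def nth_append last_conv_nth)
lemma tr_edge_is_edge: "lattice u \<Longrightarrow> lattice v \<Longrightarrow> snd v = snd u + 1 \<Longrightarrow> \<bar>fst v - fst u\<bar> = 1 \<Longrightarrow>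
   is_edge (tr_edge u v)"
  by (auto simp: tr_edge_def is_edge_def abs_if split: if_splits)
lemma tr_edge_in: "u \<in> A \<or> v \<in> A \<Longrightarrow> fst (tr_edge u v) \<in> A \<or> snd (tr_edge u v) \<in> A"
  by (auto simp: tr_edge_def)

context flow begin

abbreviation "SS \<equiv> rect a b c d"

lemma gf_at: "y \<in> SS \<Longrightarrow> (fst (e_sw y) \<notin> SS \<longrightarrow> \<eta> (e_sw y) = 0) \<and>
        (fst (e_nw y) \<notin> SS \<longrightarrow> \<eta> (e_nw y) = 0) \<and>
        \<eta> (e_ne y) = \<xi> y + max 0 (\<eta> (e_sw y) - \<eta> (e_nw y)) \<and>
        \<eta> (e_se y) = \<xi> y + max 0 (\<eta> (e_nw y) - \<eta> (e_sw y))"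
  using gf unfolding gen_flow_def by blast

lemma eta_nn_up: "y \<in> SS \<Longrightarrow> 0 \<le> \<eta> (e_ne y) \<and> 0 \<le> \<eta> (e_se y)"
  using gf_at[of y] xi_nn by (auto simp: max_def)

lemma eta_nn: "y \<in> SS \<Longrightarrow> 0 \<le> \<eta> (e_sw y) \<and> 0 \<le> \<eta> (e_nw y) \<and> 0 \<le> \<eta> (e_ne y) \<and> 0 \<le> \<eta> (e_se y)"
proof -
  assume y: "y \<in> SS"
  have "0 \<le> \<eta> (e_sw y)"
  proof (cases "fst (e_sw y) \<in> SS")
    case True then show ?thesis using eta_nn_up[of "fst (e_sw y)"] sw_ne[of y] by simp
  next
    case False then show ?thesis using gf_at[OF y] by simp
  qed
  moreover have "0 \<le> \<eta> (e_nw y)"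
  proof (cases "fst (e_nw y) \<in> SS")
    case True then show ?thesis using eta_nn_up[of "fst (e_nw y)"] nw_se[of y] by simp
  next
    case False then show ?thesis using gf_at[OF y] by simp
  qed
  ultimately show ?thesis using eta_nn_up[OF y] by simp
qed

lemma assoc_det:
  assumes y: "y \<in> SS" and A: "assoc \<eta> \<xi> y f1 p1 f2 p2" and B: "assoc \<eta> \<xi> y f1 p1 f2' p2'"
  shows "f2' = f2 \<and> p2' = p2"
  using A B gf_at[OF y] edges_distinct[of y] unfolding assoc_def by (auto simp: max_def)

lemma assoc_ex:
  assumes y: "y \<in> SS" and f1: "f1 \<in> {e_sw y, e_se y}" and p1: "0 < p1" "p1 \<le> \<eta> f1"
  shows "\<exists>f2 p2. assoc \<eta> \<xi> y f1 p1 f2 p2"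
proof -
  note g = gf_at[OF y] and nn = eta_nn[OF y] and d = edges_distinct[of y]
  have xy: "0 \<le> \<xi> y" using xi_nn y by auto
  show ?thesis
  proof (cases "f1 = e_sw y")
    case True
    show ?thesis
    proof (cases "p1 \<le> \<eta> (e_nw y)")
      case True2: True
      show ?thesis
        by (rule exI[of _ "e_nw y"], rule exI[of _ p1]) (use True True2 p1 in \<open>auto simp: assoc_def\<close>)
    next
      case False
      show ?thesis
        by (rule exI[of _ "e_ne y"], rule exI[of _ "p1 - \<eta> (e_nw y)"])
          (use True False p1 g xy in \<open>auto simp: assoc_def max_def\<close>)
    qed
  next
    case False
    then have f1e: "f1 = e_se y" using f1 by auto
    show ?thesis
    proof (cases "p1 + \<eta> (e_sw y) \<le> \<eta> (e_nw y)")
      case True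
      show ?thesis
        by (rule exI[of _ "e_nw y"], rule exI[of _ "p1 + \<eta> (e_sw y)"])
          (use True f1e p1 nn d in \<open>auto simp: assoc_def\<close>)
    next
      case False2: False
      show ?thesis
        by (rule exI[of _ "e_ne y"], rule exI[of _ "p1 + \<eta> (e_ne y) - \<eta> (e_se y)"])
          (use False2 f1e p1 nn d g xy in \<open>auto simp: assoc_def max_def\<close>)
    qed
  qed
qed

abbreviation "CC \<equiv> crossing_traces SS"

lemma C_struct:
  assumes l: "l \<in> CC"
  shows "3 \<le> length l \<and> l ! 1 \<in> SS \<and> hd l \<notin> SS \<and> hd l = l ! 0 \<and> hd l \<in> closure_dom SS \<and>
     broken_trace l \<and> last l \<notin> SS \<and> last l \<in> closure_dom SS \<and>
     (\<forall>i. 0 < i \<and> i + 1 < length l \<longrightarrow> l ! i \<in> SS)"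
proof -
  have ti: "trace_in SS l" "hd l \<in> bdry_dom SS" "last l \<in> bdry_dom SS"
    using l unfolding crossing_traces_def by auto
  have bt: "broken_trace l" and len: "2 \<le> length l" using ti unfolding trace_in_def broken_trace_def by auto
  have h0: "hd l = l ! 0" using len by (cases l) auto
  have hS: "hd l \<notin> SS" "last l \<notin> SS" "hd l \<in> closure_dom SS" "last l \<in> closure_dom SS"
    using ti unfolding bdry_dom_def by auto
  have "trace_edge l 0 \<in> edges_dom SS" using ti len unfolding trace_in_def by auto
  then have "fst (tr_edge (l!0) (l!1)) \<in> SS \<or> snd (tr_edge (l!0) (l!1)) \<in> SS"
    unfolding edges_dom_def trace_edge_def by auto
  then have l1: "l ! 1 \<in> SS" using tr_ends[of "l!0" "l!1"] hS h0 by auto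
  have "length l \<noteq> 2"
  proof
    assume "length l = 2"
    moreover have "l \<noteq> []" using len by auto
    ultimately have "last l = l ! 1" by (simp add: last_conv_nth)
    then show False using l1 hS by simp
  qed
  then show ?thesis using len l1 hS h0 bt ti unfolding trace_in_def by auto
qed

lemma first_edge:
  assumes l: "l \<in> CC"
  shows "(hd l = (fst (l!1) - 1, snd (l!1) - 1) \<and> trace_edge l 0 = e_sw (l!1)) \<or>
         (hd l = (fst (l!1) + 1, snd (l!1) - 1) \<and> trace_edge l 0 = e_se (l!1))"
proof -
  note st = C_struct[OF l]
  have s: "snd (l!1) = snd (l!0) + 1 \<and> (fst (l!1) = fst (l!0) + 1 \<or> fst (l!1) = fst (l!0) - 1)"
    using bt_step[of l 0] st by auto
  have te: "trace_edge l 0 = tr_edge (l!0) (l!1)" by (simp add: trace_edge_def)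
  from s consider (up) "snd (l!1) = snd (l!0) + 1" "fst (l!1) = fst (l!0) + 1"
    | (down) "snd (l!1) = snd (l!0) + 1" "fst (l!1) = fst (l!0) - 1" by blast
  then show ?thesis
  proof cases
    case up
    then have "hd l = (fst (l!1) - 1, snd (l!1) - 1)" using st by (cases "l!0") auto
    then show ?thesis using tr_up[OF up(2,1)] te by auto
  next
    case down
    then have "hd l = (fst (l!1) + 1, snd (l!1) - 1)" using st by (cases "l!0") auto
    then show ?thesis using tr_down[OF down(2,1)] te by auto
  qed
qed

lemma W_zero:
  assumes l: "l \<in> CC" and h: "hd l \<noteq> (fst (l!1) + 1, snd (l!1) - 1)"
  shows "Wset \<eta> \<xi> l = {}"
proof -
  note st = C_struct[OF l]
  have e: "hd l = (fst (l!1) - 1, snd (l!1) - 1)" "trace_edge l 0 = e_sw (l!1)"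
    using first_edge[OF l] h by auto
  have "fst (e_sw (l!1)) = hd l" using e by (simp add: e_sw_def)
  then have "\<eta> (trace_edge l 0) = 0" using gf_at[of "l!1"] st e by auto
  then show ?thesis unfolding Wset_def by auto
qed

lemma S_snd: "z \<in> SS \<Longrightarrow> a - d \<le> 2 * snd z \<and> 2 * snd z \<le> b - c"
  unfolding rect_def by auto

lemma closure_snd: "z \<in> closure_dom SS \<Longrightarrow> a - d - 2 \<le> 2 * snd z \<and> 2 * snd z \<le> b - c + 2"
  unfolding closure_dom_def adjacent_def using S_snd by fastforce

lemma finite_closure: "finite (closure_dom SS)"
proof -
  have "closure_dom SS \<subseteq> SS \<union> (\<lambda>(q, dt, dx). (fst q + dt, snd q + dx)) ` (SS \<times> {-1, 1} \<times> {-1, 1})"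
  proof
    fix z assume "z \<in> closure_dom SS"
    then have "z \<in> SS \<or> (\<exists>q\<in>SS. \<bar>fst z - fst q\<bar> = 1 \<and> \<bar>snd z - snd q\<bar> = 1)"
      unfolding closure_dom_def adjacent_def by auto
    then show "z \<in> SS \<union> (\<lambda>(q, dt, dx). (fst q + dt, snd q + dx)) ` (SS \<times> {-1, 1} \<times> {-1, 1})"
    proof
      assume "\<exists>q\<in>SS. \<bar>fst z - fst q\<bar> = 1 \<and> \<bar>snd z - snd q\<bar> = 1"
      then obtain q where q: "q \<in> SS" "\<bar>fst z - fst q\<bar> = 1" "\<bar>snd z - snd q\<bar> = 1" by blast
      then have "z = (\<lambda>(q, dt, dx). (fst q + dt, snd q + dx)) (q, fst z - fst q, snd z - snd q)" by simp
      moreover have "(q, fst z - fst q, snd z - snd q) \<in> SS \<times> {-1, 1} \<times> {-1, 1}"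
        using q by (auto simp: abs_if split: if_splits)
      ultimately show ?thesis by blast
    qed simp
  qed
  moreover have "finite (SS \<times> {-1::int, 1} \<times> {-1::int, 1})" using finite_S by simp
  ultimately show ?thesis using finite_S by (meson finite_Un finite_imageI finite_subset)
qed

lemma finite_C: "finite CC"
proof (rule finite_subset)
  let ?N = "nat (b - c - a + d + 5)"
  show "CC \<subseteq> {xs. set xs \<subseteq> closure_dom SS \<and> length xs \<le> ?N}"
  proof
    fix l assume l: "l \<in> CC"
    note st = C_struct[OF l]
    have "set l \<subseteq> closure_dom SS"
    proof
      fix z assume "z \<in> set l"
      then obtain i where i: "i < length l" "z = l ! i" by (auto simp: in_set_conv_nth)
      show "z \<in> closure_dom SS"
      proof (cases "i = 0 \<or> i = length l - 1")
        case True
        have "l \<noteq> []" using st by auto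
        then show ?thesis using True st i by (auto simp: last_conv_nth)
      next
        case False then have "z \<in> SS" using st i by auto
        then show ?thesis unfolding closure_dom_def by auto
      qed
    qed
    moreover have "length l \<le> ?N"
    proof -
      have "snd (last l) = snd (l ! 0) + int (length l - 1)"
      proof -
        have "l \<noteq> []" using st by auto
        then show ?thesis using bt_snd[of l "length l - 1"] st by (simp add: last_conv_nth)
      qed
      then show ?thesis using closure_snd[of "last l"] closure_snd[of "hd l"] st by auto
    qed
    ultimately show "l \<in> {xs. set xs \<subseteq> closure_dom SS \<and> length xs \<le> ?N}" by simp
  qed
  show "finite {xs. set xs \<subseteq> closure_dom SS \<and> length xs \<le> ?N}"
    by (rule finite_lists_length_le[OF finite_closure])
qed

lemma trace_unique:
  assumes l: "l \<in> CC" and l': "l' \<in> CC" and h: "hd l = hd l'" and one: "l ! 1 = l' ! 1"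
    and p: "p \<in> Wset \<eta> \<xi> l" and p': "p \<in> Wset \<eta> \<xi> l'"
  shows "l = l'"
proof -
  note st = C_struct[OF l] and st' = C_struct[OF l']
  obtain ps where ps: "length ps = length l - 1" "ps ! 0 = p"
    "\<forall>i. 1 \<le> i \<and> i < length l - 1 \<longrightarrow> assoc \<eta> \<xi> (l ! i) (trace_edge l (i - 1)) (ps ! (i - 1)) (trace_edge l i) (ps ! i)"
    using p unfolding Wset_def by blast
  obtain ps' where ps': "length ps' = length l' - 1" "ps' ! 0 = p"
    "\<forall>i. 1 \<le> i \<and> i < length l' - 1 \<longrightarrow> assoc \<eta> \<xi> (l' ! i) (trace_edge l' (i - 1)) (ps' ! (i - 1)) (trace_edge l' i) (ps' ! i)"
    using p' unfolding Wset_def by blast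
  have P: "k + 1 < length l \<and> k + 1 < length l' \<longrightarrow> l ! k = l' ! k \<and> l ! (k+1) = l' ! (k+1) \<and> ps ! k = ps' ! k" for k
  proof (induction k)
    case 0 then show ?case using st st' h one ps ps' by auto
  next
    case (Suc k)
    show ?case
    proof
      assume lk: "Suc k + 1 < length l \<and> Suc k + 1 < length l'"
      then have IH: "l ! k = l' ! k" "l ! (k+1) = l' ! (k+1)" "ps ! k = ps' ! k" using Suc by auto
      have yS: "l ! (k+1) \<in> SS" using st lk by auto
      have A: "assoc \<eta> \<xi> (l ! (k+1)) (trace_edge l k) (ps ! k) (trace_edge l (k+1)) (ps ! (k+1))"
        using ps(3)[rule_format, of "k+1"] lk by auto
      have A': "assoc \<eta> \<xi> (l' ! (k+1)) (trace_edge l' k) (ps' ! k) (trace_edge l' (k+1)) (ps' ! (k+1))"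
        using ps'(3)[rule_format, of "k+1"] lk by auto
      have "trace_edge l k = trace_edge l' k" using IH unfolding trace_edge_def by simp
      then have A'': "assoc \<eta> \<xi> (l ! (k+1)) (trace_edge l k) (ps ! k) (trace_edge l' (k+1)) (ps' ! (k+1))"
        using A' IH by simp
      from assoc_det[OF yS A A''] have E: "trace_edge l' (k+1) = trace_edge l (k+1)" "ps' ! (k+1) = ps ! (k+1)"
        by auto
      have s1: "snd (l ! (k+2)) = snd (l ! (k+1)) + 1" using bt_step[of l "k+1"] st lk by auto
      have s2: "snd (l' ! (k+2)) = snd (l' ! (k+1)) + 1" using bt_step[of l' "k+1"] st' lk by auto
      have "tr_edge (l ! (k+1)) (l ! (k+2)) = tr_edge (l ! (k+1)) (l' ! (k+2))"
        using E(1) IH unfolding trace_edge_def by (simp add: numeral_2_eq_2)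
      then have "l ! (k+2) = l' ! (k+2)"
        by (rule tr_inj) (use s1 s2 IH in \<open>auto simp: prod_eq_iff\<close>)
      then show "l ! Suc k = l' ! Suc k \<and> l ! (Suc k + 1) = l' ! (Suc k + 1) \<and> ps ! Suc k = ps' ! Suc k"
        using IH E by (simp add: numeral_2_eq_2)
    qed
  qed
  have len: "length l = length l'"
  proof (rule ccontr)
    assume "length l \<noteq> length l'"
    then consider "length l < length l'" | "length l' < length l" by linarith
    then show False
    proof cases
      case 1
      have sl: "Suc (length l - 2) = length l - 1" using st by auto
      have "l ! (length l - 1) = l' ! (length l - 1)" using P[of "length l - 2"] 1 st sl by auto
      moreover have "l ! (length l - 1) \<notin> SS" using st last_conv_nth[of l] by fastforce
      moreover have "l' ! (length l - 1) \<in> SS" using st' 1 st by auto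
      ultimately show False by simp
    next
      case 2
      have sl: "Suc (length l' - 2) = length l' - 1" using st' by auto
      have "l ! (length l' - 1) = l' ! (length l' - 1)" using P[of "length l' - 2"] 2 st' sl by auto
      moreover have "l' ! (length l' - 1) \<notin> SS" using st' last_conv_nth[of l'] by fastforce
      moreover have "l ! (length l' - 1) \<in> SS" using st' 2 st by auto
      ultimately show False by simp
    qed
  qed
  show ?thesis
  proof (rule nth_equalityI)
    show "length l = length l'" by (rule len)
    fix i assume i: "i < length l"
    show "l ! i = l' ! i"
    proof (cases "i + 1 < length l")
      case True then show ?thesis using P[of i] len by auto
    next
      case False
      then have "i = (length l - 2) + 1" using i st by auto
      then show ?thesis using P[of "length l - 2"] len st by auto
    qed
  qed
qed

definition pre :: "point \<Rightarrow> point \<Rightarrow> real \<Rightarrow> point list \<Rightarrow> real list \<Rightarrow> bool" where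
  "pre h y p ys ps \<longleftrightarrow> 2 \<le> length ys \<and> ys ! 0 = h \<and> ys ! 1 = y \<and> broken_trace ys \<and>
     (\<forall>i < length ys. lattice (ys ! i)) \<and> (\<forall>i. 0 < i \<and> i + 1 < length ys \<longrightarrow> ys ! i \<in> SS) \<and>
     length ps = length ys - 1 \<and> ps ! 0 = p \<and>
     (\<forall>i < length ys - 1. 0 < ps ! i \<and> ps ! i \<le> \<eta> (trace_edge ys i)) \<and>
     (\<forall>i. 1 \<le> i \<and> i < length ys - 1 \<longrightarrow>
        assoc \<eta> \<xi> (ys ! i) (trace_edge ys (i - 1)) (ps ! (i - 1)) (trace_edge ys i) (ps ! i))"

lemma pre_extend:
  assumes P: "pre h y p ys ps" and z: "last ys \<in> SS"
  shows "\<exists>v p2. pre h y p (ys @ [v]) (ps @ [p2])"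
proof -
  let ?L = "length ys"
  have L: "2 \<le> ?L" "ys \<noteq> []" using P unfolding pre_def by auto
  define z where "z = last ys"
  define u where "u = ys ! (?L - 2)"
  have zL: "z = ys ! (?L - 1)" unfolding z_def using L by (simp add: last_conv_nth)
  have bt: "broken_trace ys" using P unfolding pre_def by auto
  have st: "snd z = snd u + 1 \<and> (fst z = fst u + 1 \<or> fst z = fst u - 1)"
    using bt_step[OF bt, of "?L - 2"] L unfolding zL u_def by (simp add: Suc_diff_Suc numeral_2_eq_2)
  have f1e: "trace_edge ys (?L - 2) = tr_edge u z"
    unfolding trace_edge_def u_def zL using L by (simp add: Suc_diff_Suc numeral_2_eq_2)
  have f1: "tr_edge u z \<in> {e_sw z, e_se z}" using st tr_up[of z u] tr_down[of z u] by auto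
  have B: "\<forall>i < ?L - 1. 0 < ps ! i \<and> ps ! i \<le> \<eta> (trace_edge ys i)" using P unfolding pre_def by blast
  have q: "0 < ps ! (?L - 2)" "ps ! (?L - 2) \<le> \<eta> (tr_edge u z)" using B[rule_format, of "?L - 2"] f1e L by auto
  have zS: "z \<in> SS" using z z_def by simp
  obtain f2 p2 where A: "assoc \<eta> \<xi> z (tr_edge u z) (ps ! (?L - 2)) f2 p2"
    using assoc_ex[OF zS f1 q] by blast
  have f2: "f2 \<in> {e_nw z, e_ne z}" "0 < p2" "p2 \<le> \<eta> f2" using A unfolding assoc_def by auto
  define v where "v = (if f2 = e_ne z then (fst z + 1, snd z + 1) else (fst z - 1, snd z + 1))"
  have vs: "snd v = snd z + 1" "\<bar>fst v - fst z\<bar> = 1" unfolding v_def by auto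
  have tv: "tr_edge z v = f2" using f2 tr_up[of v z] tr_down[of v z] unfolding v_def by auto
  have latz: "lattice z" using P L unfolding pre_def zL by auto
  have latv: "lattice v" using latz unfolding v_def lattice_def by (auto; presburger)
  let ?ys = "ys @ [v]" and ?ps = "ps @ [p2]"
  have lps: "length ps = ?L - 1" using P unfolding pre_def by auto
  have "pre h y p ?ys ?ps" unfolding pre_def
  proof (intro conjI allI impI)
    show "2 \<le> length ?ys" using L by simp
    show "?ys ! 0 = h" using P L unfolding pre_def by (simp add: nth_append)
    show "?ys ! 1 = y" using P L unfolding pre_def by (simp add: nth_append)
    show "broken_trace ?ys" unfolding broken_trace_def
    proof (rule conjI; (intro allI impI)?)
      show "2 \<le> length ?ys" using L by simp
      fix i assume i: "i + 1 < length ?ys"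
      show "snd (?ys ! (i + 1)) = snd (?ys ! i) + 1 \<and> \<bar>fst (?ys ! (i + 1)) - fst (?ys ! i)\<bar> = 1"
      proof (cases "i + 1 < ?L")
        case True then show ?thesis using bt unfolding broken_trace_def by (auto simp: nth_append)
      next
        case False then have "i = ?L - 1" using i by auto
        then show ?thesis using vs zL L by (auto simp: nth_append)
      qed
    qed
    show "lattice (?ys ! i)" if "i < length ?ys" for i
      using that P latv unfolding pre_def by (auto simp: nth_append less_Suc_eq)
    show "?ys ! i \<in> SS" if "0 < i \<and> i + 1 < length ?ys" for i
    proof (cases "i + 1 < ?L")
      case True then show ?thesis using that P unfolding pre_def by (auto simp: nth_append)
    next
      case False then have "i = ?L - 1" using that by auto
      then show ?thesis using zS zL L by (auto simp: nth_append)
    qed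
    show "length ?ps = length ?ys - 1" using lps L by simp
    show "?ps ! 0 = p" using P L lps unfolding pre_def by (simp add: nth_append)
    show "0 < ?ps ! i" "?ps ! i \<le> \<eta> (trace_edge ?ys i)" if "i < length ?ys - 1" for i
    proof -
      have "0 < ?ps ! i \<and> ?ps ! i \<le> \<eta> (trace_edge ?ys i)"
      proof (cases "i < ?L - 1")
        case True then show ?thesis using P lps te_app[of i ys "[v]"] unfolding pre_def by (auto simp: nth_append)
      next
        case False then have "i = ?L - 1" using that by auto
        then show ?thesis using f2 tv te_last[OF L(2), of v] lps z_def by (auto simp: nth_append)
      qed
      then show "0 < ?ps ! i" "?ps ! i \<le> \<eta> (trace_edge ?ys i)" by auto
    qed
    show "assoc \<eta> \<xi> (?ys ! i) (trace_edge ?ys (i - 1)) (?ps ! (i - 1)) (trace_edge ?ys i) (?ps ! i)"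
      if "1 \<le> i \<and> i < length ?ys - 1" for i
    proof (cases "i < ?L - 1")
      case True then show ?thesis using that P lps te_app[of i ys "[v]"] te_app[of "i - 1" ys "[v]"]
        unfolding pre_def by (auto simp: nth_append)
    next
      case False then have i: "i = ?L - 1" using that by auto
      have "trace_edge ?ys (i - 1) = tr_edge u z" using te_app[of "i - 1" ys "[v]"] f1e i L
        by (simp add: numeral_2_eq_2)
      moreover have "trace_edge ?ys i = f2" using te_last[OF L(2), of v] tv i z_def by simp
      moreover have "?ys ! i = z" using i zL L by (simp add: nth_append)
      moreover have "?ps ! (i - 1) = ps ! (?L - 2)" "?ps ! i = p2" using i lps L by (auto simp: nth_append numeral_2_eq_2)
      ultimately show ?thesis using A by simp
    qed
  qed
  then show ?thesis by blast
qed

lemma cover: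
  assumes y: "y \<in> SS" and h: "h = (fst y + 1, snd y - 1)" "h \<notin> SS" and p: "0 < p" "p \<le> \<eta> (e_se y)"
  shows "\<exists>l\<in>CC. l ! 1 = y \<and> hd l = h \<and> p \<in> Wset \<eta> \<xi> l"
proof -
  have laty: "lattice y" using y unfolding rect_def lattice_def by auto
  have lath: "lattice h" using laty h unfolding lattice_def by auto
  have hy: "fst y = fst h - 1" "snd y = snd h + 1" using h(1) by auto
  have tr0: "tr_edge h y = e_se y" by (rule conjunct2[OF tr_down[OF hy]])
  have base: "pre h y p [h, y] [p]" unfolding pre_def broken_trace_def trace_edge_def
    using laty lath h p tr0 by (auto simp: less_Suc_eq nth_Cons')
  have ex: "\<exists>ys ps. pre h y p ys ps \<and> (last ys \<notin> SS \<or> k + 2 \<le> length ys)" for k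
  proof (induction k)
    case 0 then show ?case using base by (intro exI[of _ "[h, y]"] exI[of _ "[p]"]) auto
  next
    case (Suc k)
    then obtain ys ps where P: "pre h y p ys ps" and D: "last ys \<notin> SS \<or> k + 2 \<le> length ys" by blast
    show ?case
    proof (cases "last ys \<in> SS")
      case False then show ?thesis using P by blast
    next
      case True
      then obtain v p2 where "pre h y p (ys @ [v]) (ps @ [p2])" using pre_extend[OF P] by blast
      then show ?thesis using D True by (intro exI[of _ "ys @ [v]"] exI[of _ "ps @ [p2]"]) auto
    qed
  qed
  let ?K = "nat (b - c - a + d + 1)"
  obtain ys ps where P: "pre h y p ys ps" and D: "last ys \<notin> SS \<or> ?K + 2 \<le> length ys" using ex by blast
  have L: "2 \<le> length ys" "ys \<noteq> []" and bt: "broken_trace ys" and y1: "ys ! 1 = y" and h0: "ys ! 0 = h"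
    using P unfolding pre_def by auto
  have lastn: "last ys = ys ! (length ys - 1)" using L by (simp add: last_conv_nth)
  have nS: "last ys \<notin> SS"
  proof
    assume lS: "last ys \<in> SS"
    then have "?K + 2 \<le> length ys" using D by simp
    have "snd (last ys) = snd h + int (length ys - 1)" using bt_snd[OF bt, of "length ys - 1"] L h0 lastn by simp
    then show False using S_snd[OF lS] S_snd[OF y] h \<open>?K + 2 \<le> length ys\<close> by auto
  qed
  have L3: "3 \<le> length ys"
  proof (rule ccontr)
    assume "\<not> 3 \<le> length ys"
    then have "length ys = 2" using L by simp
    then have "last ys = y" using lastn y1 by simp
    then show False using nS y by simp
  qed
  have int: "\<And>i. 0 < i \<and> i + 1 < length ys \<Longrightarrow> ys ! i \<in> SS" using P unfolding pre_def by auto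
  have lat: "\<And>i. i < length ys \<Longrightarrow> lattice (ys ! i)" using P unfolding pre_def by auto
  have hdh: "hd ys = h" using L h0 by (cases ys) auto
  have "adjacent h y" using h(1) unfolding adjacent_def by auto
  then have hcl: "h \<in> closure_dom SS" using lath y unfolding closure_dom_def by blast
  have lcl: "last ys \<in> closure_dom SS"
  proof -
    have "ys ! (length ys - 2) \<in> SS" using int[of "length ys - 2"] L3 by auto
    moreover have "snd (last ys) = snd (ys ! (length ys - 2)) + 1 \<and>
        (fst (last ys) = fst (ys ! (length ys - 2)) + 1 \<or> fst (last ys) = fst (ys ! (length ys - 2)) - 1)"
      using bt_step[OF bt, of "length ys - 2"] L3 lastn by (simp add: Suc_diff_Suc numeral_2_eq_2)
    moreover have "lattice (last ys)" using lat[of "length ys - 1"] lastn L by simp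
    ultimately show ?thesis unfolding closure_dom_def adjacent_def by force
  qed
  have edges: "\<forall>i. i + 1 < length ys \<longrightarrow> trace_edge ys i \<in> edges_dom SS"
  proof (intro allI impI)
    fix i assume i: "i + 1 < length ys"
    have "is_edge (trace_edge ys i)" unfolding trace_edge_def
      using tr_edge_is_edge[of "ys ! i" "ys ! (i+1)"] lat[of i] lat[of "i+1"] i bt unfolding broken_trace_def
      by auto
    moreover have "ys ! i \<in> SS \<or> ys ! (i + 1) \<in> SS"
    proof (cases "i = 0")
      case True then show ?thesis using y1 y by simp
    next
      case False then show ?thesis using int[of i] i by auto
    qed
    ultimately show "trace_edge ys i \<in> edges_dom SS" unfolding edges_dom_def trace_edge_def
      using tr_edge_in[of "ys ! i" SS "ys ! (i+1)"] by auto
  qed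
  have inC: "ys \<in> CC" unfolding crossing_traces_def trace_in_def bdry_dom_def
    using bt hdh hcl lcl nS h int edges by auto
  have "p \<in> Wset \<eta> \<xi> ys" unfolding Wset_def using P p unfolding pre_def by auto
  then show ?thesis using inC y1 hdh by blast
qed

lemma partition:
  assumes y: "y \<in> SS" and h: "h = (fst y + 1, snd y - 1)" "h \<notin> SS"
  shows "(\<Sum>l\<in>{l\<in>CC. l ! 1 = y \<and> hd l = h}. weight \<eta> \<xi> l) = \<eta> (e_se y)"
proof -
  let ?T = "{l\<in>CC. l ! 1 = y \<and> hd l = h}"
  have fin: "finite ?T" using finite_C by simp
  have sub: "Wset \<eta> \<xi> l \<subseteq> {0<..\<eta> (e_se y)}" if l: "l \<in> ?T" for l
  proof -
    have "trace_edge l 0 = e_se y" using first_edge[of l] l h by auto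
    then show ?thesis unfolding Wset_def by auto
  qed
  have disj: "disjoint_family_on (Wset \<eta> \<xi>) ?T"
    unfolding disjoint_family_on_def
  proof (intro ballI impI)
    fix l l' assume l: "l \<in> ?T" and l': "l' \<in> ?T" and ne: "l \<noteq> l'"
    show "Wset \<eta> \<xi> l \<inter> Wset \<eta> \<xi> l' = {}"
    proof (rule ccontr)
      assume "Wset \<eta> \<xi> l \<inter> Wset \<eta> \<xi> l' \<noteq> {}"
      then obtain p where "p \<in> Wset \<eta> \<xi> l" "p \<in> Wset \<eta> \<xi> l'" by blast
      then have "l = l'" using trace_unique[of l l' p] l l' by auto
      then show False using ne by simp
    qed
  qed
  have un: "(\<Union>l\<in>?T. Wset \<eta> \<xi> l) = {0<..\<eta> (e_se y)}"
  proof
    show "(\<Union>l\<in>?T. Wset \<eta> \<xi> l) \<subseteq> {0<..\<eta> (e_se y)}" using sub by blast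
    show "{0<..\<eta> (e_se y)} \<subseteq> (\<Union>l\<in>?T. Wset \<eta> \<xi> l)" using cover[OF y h] by fastforce
  qed
  have fm: "emeasure lborel (Wset \<eta> \<xi> l) \<noteq> \<infinity>" if "l \<in> ?T" for l
  proof -
    have bd: "bounded (Wset \<eta> \<xi> l)" using sub[OF that] bounded_subset bounded_Ioc by blast
    show ?thesis using emeasure_bounded_finite[OF bd] by auto
  qed
  have "(\<Sum>l\<in>?T. weight \<eta> \<xi> l) = (\<Sum>l\<in>?T. measure lborel (Wset \<eta> \<xi> l))" by (simp add: weight_W)
  also have "\<dots> = measure lborel (\<Union>l\<in>?T. Wset \<eta> \<xi> l)"
    by (rule measure_finite_Union[symmetric]) (use fin disj fm Wset_meas in auto)
  also have "\<dots> = \<eta> (e_se y)" using un eta_nn[OF y] by simp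
  finally show ?thesis .
qed

lemma tele: "(\<Sum>i\<le>k. F gg i nn - Fl gg i nn) = F gg k nn"
  by (induction k) (auto simp: Fl_def)

lemma H_eq: "H_S SS \<eta> \<xi> = F gg mm nn"
proof -
  let ?T = "{l\<in>CC. hd l = (fst (l!1) + 1, snd (l!1) - 1)}"
  let ?Top = "{y\<in>SS. (fst y + 1, snd y - 1) \<notin> SS}"
  have "H_S SS \<eta> \<xi> = (\<Sum>l\<in>CC. weight \<eta> \<xi> l)" unfolding H_S_def ..
  also have "\<dots> = (\<Sum>l\<in>?T. weight \<eta> \<xi> l)"
  proof (rule sum.mono_neutral_right)
    show "finite CC" by (rule finite_C)
    show "?T \<subseteq> CC" by auto
    show "\<forall>l\<in>CC - ?T. weight \<eta> \<xi> l = 0"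
    proof
      fix l assume "l \<in> CC - ?T"
      then have "Wset \<eta> \<xi> l = {}" using W_zero[of l] by auto
      then show "weight \<eta> \<xi> l = 0" by (simp add: weight_W)
    qed
  qed
  also have "\<dots> = (\<Sum>y\<in>?Top. \<Sum>l\<in>{l\<in>?T. l ! 1 = y}. weight \<eta> \<xi> l)"
  proof (rule sum.group[symmetric])
    show "finite ?T" using finite_C by simp
    show "finite ?Top" using finite_S by simp
    show "(\<lambda>l. l ! 1) ` ?T \<subseteq> ?Top"
    proof
      fix y assume "y \<in> (\<lambda>l. l ! 1) ` ?T"
      then obtain l where l: "l \<in> CC" "hd l = (fst (l!1) + 1, snd (l!1) - 1)" "y = l ! 1" by blast
      note st = C_struct[OF l(1)]
      show "y \<in> ?Top" using st l by auto
    qed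
  qed
  also have "\<dots> = (\<Sum>y\<in>?Top. \<eta> (e_se y))"
  proof (rule sum.cong)
    fix y assume y: "y \<in> ?Top"
    have "{l\<in>?T. l ! 1 = y} = {l\<in>CC. l ! 1 = y \<and> hd l = (fst y + 1, snd y - 1)}" by auto
    then show "(\<Sum>l\<in>{l\<in>?T. l ! 1 = y}. weight \<eta> \<xi> l) = \<eta> (e_se y)"
      using partition[of y "(fst y + 1, snd y - 1)"] y by simp
  qed simp
  also have "?Top = (\<lambda>i. pt i nn) ` {..mm}"
  proof
    show "?Top \<subseteq> (\<lambda>i. pt i nn) ` {..mm}"
    proof
      fix y assume y: "y \<in> ?Top"
      then obtain i j where ij: "y = pt i j" "i \<le> mm" "j \<le> nn" using S_pt by blast
      have "pt i (Suc j) \<notin> SS" using y ij pt_se[of i j] by simp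
      then have "j = nn" using pt_in[of i "Suc j"] ij by auto
      then show "y \<in> (\<lambda>i. pt i nn) ` {..mm}" using ij by auto
    qed
    show "(\<lambda>i. pt i nn) ` {..mm} \<subseteq> ?Top"
    proof
      fix y assume "y \<in> (\<lambda>i. pt i nn) ` {..mm}"
      then obtain i where i: "y = pt i nn" "i \<le> mm" by auto
      have "pt i (Suc nn) \<notin> SS" using pt_in by simp
      then show "y \<in> ?Top" using i pt_in pt_se[of i nn] by auto
    qed
  qed
  also have "(\<Sum>y\<in>(\<lambda>i. pt i nn) ` {..mm}. \<eta> (e_se y)) = (\<Sum>i\<le>mm. \<eta> (e_se (pt i nn)))"
    by (rule sum.reindex_cong[of "\<lambda>i. pt i nn"]) (auto simp: inj_on_def pt_inj)
  also have "\<dots> = (\<Sum>i\<le>mm. F gg i nn - Fl gg i nn)"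
    using flow_closed by (intro sum.cong) auto
  also have "\<dots> = F gg mm nn" by (rule tele)
  finally show ?thesis .
qed

end

theorem mainTheorem11:
  fixes a b c d :: int and \<xi> :: "point \<Rightarrow> real" and \<eta> :: "edge \<Rightarrow> real"
  assumes "even a" "even b" "even c" "even d" "a \<le> b" "c \<le> d"
    and "\<forall>y\<in>rect a b c d. 0 \<le> \<xi> y"
    and "gen_flow (rect a b c d) \<xi> \<eta>"
  shows "G_S (rect a b c d) \<xi> = H_S (rect a b c d) \<eta> \<xi>"
proof -
  interpret flow a b c d \<xi> \<eta> using assms by unfold_locales auto
  show ?thesis using G_eq H_eq by simp
qed

end
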